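(* Let $F$ be an Archimedean vector lattice endowed with a sturdy locally solid additive convergence $\eta$. Then every regular sublattice $E$ of $F$ is order dense in its $\eta$-closure $\overline{E}$, and $\overline{E}$ is a regular sublattice of $F$.
   Context: A convergence on a vector lattice is locally solid additive if addition and $f\mapsto -f$ are continuous and $|e_\alpha|\le|f_\alpha|$, $f_\alpha\to0$ imply $e_\alpha\to0$. For a convergence, the adherence $\overline{A}^1$ of $A$ is the set of limits of convergent nets in $A$; $A$ is closed if $\overline A^1=A$; the closure $\overline A$ is the intersection of all closed sets containing $A$. Order convergence: a net converges to $f$ if there is a set $G$ with $\bigwedge G=0$ such that for each $g\in G$ the net is eventually in $[f-g,f+g]$; $\overline{E}_o$ is the closure for order convergence. A sublattice $E$ is regular if $\bigwedge_E G=0$ implies $\bigwedge_F G=0$ for all $G\subset E$; it is order dense in $H\supset E$ if every $h>0$ in $H$ dominates some $e\in E$ with $e>0$. $\eta$ is sturdy if $\overline{E}^{1}_{\eta}\subset\overline{E}_{o}$ for every regular sublattice $E$ of $F$. *)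

theory Defs
  imports Main "HOL.Real_Vector_Spaces"
begin

definition vabs :: "'a::{ordered_real_vector,lattice} \<Rightarrow> 'a" where
  "vabs x = sup x (- x)"

definition archimedean_vl :: "'a::{ordered_real_vector,lattice} itself \<Rightarrow> bool" where
  "archimedean_vl _ \<longleftrightarrow>
     (\<forall>x y::'a. 0 \<le> x \<and> (\<forall>n::nat. of_nat n *\<^sub>R x \<le> y) \<longrightarrow> x = 0)"

definition is_inf_in :: "'a::order set \<Rightarrow> 'a set \<Rightarrow> 'a \<Rightarrow> bool" where
  "is_inf_in S G x \<longleftrightarrow> x \<in> S \<and> (\<forall>g\<in>G. x \<le> g) \<and> (\<forall>y\<in>S. (\<forall>g\<in>G. y \<le> g) \<longrightarrow> y \<le> x)"

definition sublattice :: "'a::{ordered_real_vector,lattice} set \<Rightarrow> bool" where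
  "sublattice E \<longleftrightarrow> 0 \<in> E \<and> (\<forall>x\<in>E. \<forall>y\<in>E. x + y \<in> E) \<and> (\<forall>c. \<forall>x\<in>E. c *\<^sub>R x \<in> E)
     \<and> (\<forall>x\<in>E. \<forall>y\<in>E. sup x y \<in> E \<and> inf x y \<in> E)"

definition regular_sublattice :: "'a::{ordered_real_vector,lattice} set \<Rightarrow> bool" where
  "regular_sublattice E \<longleftrightarrow> sublattice E \<and>
     (\<forall>G. G \<subseteq> E \<longrightarrow> is_inf_in E G 0 \<longrightarrow> is_inf_in UNIV G 0)"

definition order_dense_in :: "'a::{ordered_real_vector,lattice} set \<Rightarrow> 'a set \<Rightarrow> bool" where
  "order_dense_in E H \<longleftrightarrow> (\<forall>h\<in>H. 0 < h \<longrightarrow> (\<exists>e\<in>E. 0 < e \<and> e \<le> h))"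

text \<open>Convergences are represented via tail filters of nets: eta F x means that
  (any net with tail filter) F converges to x.\<close>
definition convergence :: "('a filter \<Rightarrow> 'a \<Rightarrow> bool) \<Rightarrow> bool" where
  "convergence eta \<longleftrightarrow> (\<forall>x. eta (principal {x}) x)
     \<and> (\<forall>F G x. eta F x \<and> G \<le> F \<longrightarrow> eta G x)
     \<and> (\<forall>F G x. eta F x \<and> eta G x \<longrightarrow> eta (sup F G) x)"

text \<open>Nets (e_a, f_a) over a common index set are represented by filters on pairs.\<close>
definition locally_solid_additive :: "('a::{ordered_real_vector,lattice} filter \<Rightarrow> 'a \<Rightarrow> bool) \<Rightarrow> bool" where
  "locally_solid_additive eta \<longleftrightarrow> convergence eta
     \<and> (\<forall>(H::('a \<times> 'a) filter) f g. H \<noteq> bot \<and> eta (filtermap fst H) f \<and> eta (filtermap snd H) g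
          \<longrightarrow> eta (filtermap (\<lambda>(x, y). x + y) H) (f + g))
     \<and> (\<forall>F f. F \<noteq> bot \<and> eta F f \<longrightarrow> eta (filtermap uminus F) (- f))
     \<and> (\<forall>H::('a \<times> 'a) filter. H \<noteq> bot \<and> eventually (\<lambda>(e, f). vabs e \<le> vabs f) H
          \<and> eta (filtermap snd H) 0 \<longrightarrow> eta (filtermap fst H) 0)"

definition adherence :: "('a filter \<Rightarrow> 'a \<Rightarrow> bool) \<Rightarrow> 'a set \<Rightarrow> 'a set" where
  "adherence eta A = {x. \<exists>F. F \<noteq> bot \<and> eventually (\<lambda>y. y \<in> A) F \<and> eta F x}"

definition conv_closed :: "('a filter \<Rightarrow> 'a \<Rightarrow> bool) \<Rightarrow> 'a set \<Rightarrow> bool" where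
  "conv_closed eta A \<longleftrightarrow> adherence eta A = A"

definition conv_closure :: "('a filter \<Rightarrow> 'a \<Rightarrow> bool) \<Rightarrow> 'a set \<Rightarrow> 'a set" where
  "conv_closure eta A = \<Inter>{C. conv_closed eta C \<and> A \<subseteq> C}"

definition order_conv :: "'a::{ordered_real_vector,lattice} filter \<Rightarrow> 'a \<Rightarrow> bool" where
  "order_conv F f \<longleftrightarrow> (\<exists>G. is_inf_in UNIV G 0 \<and>
     (\<forall>g\<in>G. eventually (\<lambda>x. f - g \<le> x \<and> x \<le> f + g) F))"

definition sturdy :: "('a::{ordered_real_vector,lattice} filter \<Rightarrow> 'a \<Rightarrow> bool) \<Rightarrow> bool" where
  "sturdy eta \<longleftrightarrow> (\<forall>E. regular_sublattice E \<longrightarrow> adherence eta E \<subseteq> conv_closure order_conv E)"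

end

theory Submission
  imports Defs
begin


lemma sup_add_r: "sup a b + (c::'a::{ordered_real_vector,lattice}) = sup (a+c) (b+c)"
proof (rule antisym)
  have "a \<le> sup (a+c) (b+c) - c" "b \<le> sup (a+c) (b+c) - c"
    by (metis add_diff_cancel le_diff_eq sup_ge1 sup_ge2)+
  then have "sup a b \<le> sup (a+c) (b+c) - c" by simp
  then show "sup a b + c \<le> sup (a+c) (b+c)" by (metis le_diff_eq)
qed (simp add: add_right_mono)

lemma inf_add_r: "inf a b + (c::'a::{ordered_real_vector,lattice}) = inf (a+c) (b+c)"
proof (rule antisym)
  have "inf (a+c) (b+c) - c \<le> a" "inf (a+c) (b+c) - c \<le> b"
    by (metis diff_le_eq inf_le1 inf_le2)+
  then have "inf (a+c) (b+c) - c \<le> inf a b" by simp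
  then show "inf (a+c) (b+c) \<le> inf a b + c" by (metis diff_le_eq)
qed (simp add: add_right_mono)

lemma neg_sup: "- sup a (b::'a::{ordered_real_vector,lattice}) = inf (-a) (-b)"
proof (rule antisym)
  have "a \<le> - inf (-a) (-b)" by (metis inf_le1 le_minus_iff)
  moreover have "b \<le> - inf (-a) (-b)" by (metis inf_le2 le_minus_iff)
  ultimately have "sup a b \<le> - inf (-a) (-b)" by simp
  then show "inf (-a) (-b) \<le> - sup a b" by (simp add: le_minus_iff)
qed simp

lemma neg_inf: "- inf a (b::'a::{ordered_real_vector,lattice}) = sup (-a) (-b)"
  by (metis minus_minus neg_sup)

lemma inf_plus_sup: "inf a b + sup a b = a + (b::'a::{ordered_real_vector,lattice})"
proof (rule antisym)
  have "a + b - inf a b \<ge> a" "a + b - inf a b \<ge> b"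
    by (simp_all add: le_diff_eq add_left_mono add_right_mono)
  then have "sup a b \<le> a + b - inf a b" by simp
  then show "inf a b + sup a b \<le> a + b" by (simp add: le_diff_eq add.commute)
  have "a + b - sup a b \<le> a" "a + b - sup a b \<le> b"
    by (simp_all add: diff_le_eq add_left_mono add_right_mono)
  then have "a + b - sup a b \<le> inf a b" by simp
  then show "a + b \<le> inf a b + sup a b" by (metis diff_le_eq)
qed

lemma half_nonneg: "(0::'a::{ordered_real_vector,lattice}) \<le> s + s \<Longrightarrow> 0 \<le> s"
proof -
  assume "0 \<le> s + s"
  then have "(1/2::real) *\<^sub>R 0 \<le> (1/2::real) *\<^sub>R (s + s)" by (rule scaleR_left_mono) simp
  moreover have "(1/2::real) *\<^sub>R (s + s) = s"
    by (metis scaleR_collapse scaleR_half_double scaleR_one)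
  ultimately show ?thesis by simp
qed

lemma vabs_nonneg: "0 \<le> vabs (x::'a::{ordered_real_vector,lattice})"
proof -
  have "x + (-x) \<le> vabs x + vabs x" unfolding vabs_def by (rule add_mono) simp_all
  then have "0 \<le> vabs x + vabs x" by simp
  then show ?thesis by (rule half_nonneg)
qed

lemma vabs_ge: "x \<le> vabs x" "- x \<le> vabs (x::'a::{ordered_real_vector,lattice})"
  unfolding vabs_def by simp_all

lemma vabs_le: "x \<le> c \<Longrightarrow> - x \<le> c \<Longrightarrow> vabs x \<le> (c::'a::{ordered_real_vector,lattice})"
  unfolding vabs_def by simp

lemma vabs_pos: "0 \<le> x \<Longrightarrow> vabs x = (x::'a::{ordered_real_vector,lattice})"
proof -
  assume x: "0 \<le> x"
  then have "- x \<le> 0" by simp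
  then have "- x \<le> x" using x by (rule order_trans)
  then show ?thesis unfolding vabs_def by (rule sup_absorb1)
qed

lemma vabs_minus_commute: "vabs (x - y) = vabs (y - (x::'a::{ordered_real_vector,lattice}))"
  unfolding vabs_def by (simp add: sup_commute)

lemma adh_mono: "A \<subseteq> B \<Longrightarrow> adherence eta A \<subseteq> adherence eta B"
proof
  fix x assume AB: "A \<subseteq> B" and "x \<in> adherence eta A"
  then obtain F where F: "F \<noteq> bot" "eventually (\<lambda>y. y \<in> A) F" "eta F x"
    unfolding adherence_def by auto
  have "eventually (\<lambda>y. y \<in> B) F" using F(2) by (rule eventually_mono) (use AB in auto)
  then show "x \<in> adherence eta B" using F unfolding adherence_def by auto
qed

lemma adh_self: "\<forall>x. eta (principal {x}) x \<Longrightarrow> A \<subseteq> adherence eta A"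
  unfolding adherence_def by (auto intro!: exI[of _ "principal {x}" for x] simp: eventually_principal principal_eq_bot_iff)

lemma closedI: "\<forall>x. eta (principal {x}) x \<Longrightarrow> adherence eta A \<subseteq> A \<Longrightarrow> conv_closed eta A"
  unfolding conv_closed_def using adh_self by blast

lemma closure_sub: "A \<subseteq> conv_closure eta A"
  unfolding conv_closure_def by auto

lemma closure_least: "conv_closed eta C \<Longrightarrow> A \<subseteq> C \<Longrightarrow> conv_closure eta A \<subseteq> C"
  unfolding conv_closure_def by auto

lemma closure_closed:
  assumes P0: "\<forall>x. eta (principal {x}) x"
  shows "conv_closed eta (conv_closure eta A)"
proof (rule closedI[of eta, OF P0])
  show "adherence eta (conv_closure eta A) \<subseteq> conv_closure eta A"
  proof
    fix x assume x: "x \<in> adherence eta (conv_closure eta A)"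
    show "x \<in> conv_closure eta A" unfolding conv_closure_def
    proof
      fix C assume C: "C \<in> {C. conv_closed eta C \<and> A \<subseteq> C}"
      then have "conv_closure eta A \<subseteq> C" by (simp add: closure_least)
      then have "x \<in> adherence eta C" using x adh_mono by blast
      then show "x \<in> C" using C unfolding conv_closed_def by auto
    qed
  qed
qed

lemma closure_adh:
  assumes P0: "\<forall>x. eta (principal {x}) x"
  shows "adherence eta (conv_closure eta A) = conv_closure eta A"
  using closure_closed[of eta, OF P0] unfolding conv_closed_def .

lemma closure_unary:
  assumes P0: "\<forall>x. eta (principal {x}) x"
    and cont: "\<And>F x. F \<noteq> bot \<Longrightarrow> eta F x \<Longrightarrow> eta (filtermap f F) (f x)"
    and A: "\<forall>x\<in>A. f x \<in> conv_closure eta A"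
  shows "\<forall>x\<in>conv_closure eta A. f x \<in> conv_closure eta A"
proof -
  let ?K = "conv_closure eta A"
  let ?S = "{x. f x \<in> ?K}"
  have "adherence eta ?S \<subseteq> ?S"
  proof
    fix x assume "x \<in> adherence eta ?S"
    then obtain F where F: "F \<noteq> bot" "eventually (\<lambda>y. y \<in> ?S) F" "eta F x"
      unfolding adherence_def by auto
    have "filtermap f F \<noteq> bot" using F(1) by (simp add: filtermap_bot_iff)
    moreover have "eventually (\<lambda>y. y \<in> ?K) (filtermap f F)"
      using F(2) by (simp add: eventually_filtermap)
    moreover have "eta (filtermap f F) (f x)" using cont F by blast
    ultimately have "f x \<in> adherence eta ?K" unfolding adherence_def by blast
    then show "x \<in> ?S" using closure_adh[of eta, OF P0] by auto
  qed
  then have "conv_closed eta ?S" by (rule closedI[of eta, OF P0])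
  moreover have "A \<subseteq> ?S" using A by auto
  ultimately have "?K \<subseteq> ?S" by (rule closure_least)
  then show ?thesis by auto
qed

lemma closure_binary:
  assumes P0: "\<forall>x. eta (principal {x}) x"
    and cont: "\<And>F x c. F \<noteq> bot \<Longrightarrow> eta F x \<Longrightarrow> eta (filtermap (\<lambda>y. f y c) F) (f x c)"
    and comm: "\<And>x y. f x y = f y x"
    and A: "\<forall>x\<in>A. \<forall>y\<in>A. f x y \<in> A"
  shows "\<forall>x\<in>conv_closure eta A. \<forall>y\<in>conv_closure eta A. f x y \<in> conv_closure eta A"
proof -
  let ?K = "conv_closure eta A"
  have AK: "A \<subseteq> ?K" by (rule closure_sub)
  have s1: "\<forall>x\<in>?K. f x c \<in> ?K" if c: "c \<in> A" for c
  proof (rule closure_unary[of eta "\<lambda>x. f x c" A, OF P0])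
    show "\<And>F x. F \<noteq> bot \<Longrightarrow> eta F x \<Longrightarrow> eta (filtermap (\<lambda>x. f x c) F) (f x c)" by (rule cont)
    show "\<forall>x\<in>A. f x c \<in> ?K" using A c AK by blast
  qed
  have "\<forall>x\<in>?K. f x c \<in> ?K" if c: "c \<in> ?K" for c
  proof (rule closure_unary[of eta "\<lambda>x. f x c" A, OF P0])
    show "\<And>F x. F \<noteq> bot \<Longrightarrow> eta F x \<Longrightarrow> eta (filtermap (\<lambda>x. f x c) F) (f x c)" by (rule cont)
    show "\<forall>x\<in>A. f x c \<in> ?K"
    proof
      fix x assume x: "x \<in> A"
      have "f c x \<in> ?K" using s1[OF x] c by blast
      then show "f x c \<in> ?K" using comm[of x c] by simp
    qed
  qed
  then show ?thesis by blast
qed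

lemma closure_sublattice:
  assumes P0: "\<forall>x. eta (principal {x}) x"
    and cadd: "\<And>F x c. F \<noteq> bot \<Longrightarrow> eta F x \<Longrightarrow> eta (filtermap (\<lambda>y. y + c) F) (x + c)"
    and csup: "\<And>F x c. F \<noteq> bot \<Longrightarrow> eta F x \<Longrightarrow> eta (filtermap (\<lambda>y. sup y c) F) (sup x c)"
    and cinf: "\<And>F x c. F \<noteq> bot \<Longrightarrow> eta F x \<Longrightarrow> eta (filtermap (\<lambda>y. inf y c) F) (inf x c)"
    and cscale: "\<And>F x r. F \<noteq> bot \<Longrightarrow> eta F x \<Longrightarrow> eta (filtermap (\<lambda>y. r *\<^sub>R y) F) (r *\<^sub>R x)"
    and E: "sublattice E"
  shows "sublattice (conv_closure eta E)"
proof -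
  let ?K = "conv_closure eta E"
  have EK: "E \<subseteq> ?K" by (rule closure_sub)
  have E0: "0 \<in> E" and Eadd: "\<forall>x\<in>E. \<forall>y\<in>E. x + y \<in> E"
    and Esc: "\<forall>c. \<forall>x\<in>E. c *\<^sub>R x \<in> E"
    and Esup: "\<forall>x\<in>E. \<forall>y\<in>E. sup x y \<in> E" and Einf: "\<forall>x\<in>E. \<forall>y\<in>E. inf x y \<in> E"
    using E unfolding sublattice_def by auto
  have "0 \<in> ?K" using E0 EK by blast
  moreover have "\<forall>x\<in>?K. \<forall>y\<in>?K. x + y \<in> ?K"
  proof (rule closure_binary[of eta "\<lambda>x y. x + y" E, OF P0])
    show "\<And>F x c. F \<noteq> bot \<Longrightarrow> eta F x \<Longrightarrow> eta (filtermap (\<lambda>y. y + c) F) (x + c)" by (rule cadd)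
  qed (simp_all add: Eadd add.commute)
  moreover have "\<forall>x\<in>?K. \<forall>y\<in>?K. sup x y \<in> ?K"
  proof (rule closure_binary[of eta "\<lambda>x y. sup x y" E, OF P0])
    show "\<And>F x c. F \<noteq> bot \<Longrightarrow> eta F x \<Longrightarrow> eta (filtermap (\<lambda>y. sup y c) F) (sup x c)" by (rule csup)
  qed (simp_all add: Esup sup_commute)
  moreover have "\<forall>x\<in>?K. \<forall>y\<in>?K. inf x y \<in> ?K"
  proof (rule closure_binary[of eta "\<lambda>x y. inf x y" E, OF P0])
    show "\<And>F x c. F \<noteq> bot \<Longrightarrow> eta F x \<Longrightarrow> eta (filtermap (\<lambda>y. inf y c) F) (inf x c)" by (rule cinf)
  qed (simp_all add: Einf inf_commute)
  moreover have "\<forall>x\<in>?K. r *\<^sub>R x \<in> ?K" for r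
  proof (rule closure_unary[of eta "\<lambda>x. r *\<^sub>R x" E, OF P0])
    show "\<And>F x. F \<noteq> bot \<Longrightarrow> eta F x \<Longrightarrow> eta (filtermap (\<lambda>y. r *\<^sub>R y) F) (r *\<^sub>R x)" by (rule cscale)
    show "\<forall>x\<in>E. r *\<^sub>R x \<in> ?K" using Esc EK by blast
  qed
  ultimately show ?thesis unfolding sublattice_def by blast
qed

lemma inf0: "is_inf_in UNIV G (0::'a::{order,zero}) \<Longrightarrow> (\<forall>g\<in>G. t \<le> g) \<Longrightarrow> t \<le> 0"
  unfolding is_inf_in_def by auto

lemma oc_principal: "order_conv (principal {x}) (x::'a::{ordered_real_vector,lattice})"
  unfolding order_conv_def
  by (rule exI[of _ "{0}"]) (auto simp: is_inf_in_def eventually_principal)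

lemma oc_lip:
  fixes f :: "'a::{ordered_real_vector,lattice} \<Rightarrow> 'a"
  assumes h: "\<And>x y g. 0 \<le> g \<Longrightarrow> x - g \<le> y \<Longrightarrow> y \<le> x + g \<Longrightarrow> f x - g \<le> f y \<and> f y \<le> f x + g"
    and c: "order_conv F x"
  shows "order_conv (filtermap f F) (f x)"
proof -
  obtain G where G: "is_inf_in UNIV G 0" "\<forall>g\<in>G. eventually (\<lambda>y. x - g \<le> y \<and> y \<le> x + g) F"
    using c unfolding order_conv_def by auto
  have "\<forall>g\<in>G. eventually (\<lambda>y. f x - g \<le> y \<and> y \<le> f x + g) (filtermap f F)"
  proof
    fix g assume g: "g \<in> G"
    then have "0 \<le> g" using G(1) unfolding is_inf_in_def by auto
    then show "eventually (\<lambda>y. f x - g \<le> y \<and> y \<le> f x + g) (filtermap f F)"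
      using G(2) g h unfolding eventually_filtermap by (auto elim!: eventually_mono)
  qed
  then show ?thesis using G(1) unfolding order_conv_def by auto
qed

lemma oc_add: "order_conv F x \<Longrightarrow> order_conv (filtermap (\<lambda>y. y + c) F) (x + (c::'a::{ordered_real_vector,lattice}))"
  by (rule oc_lip[where f="\<lambda>y. y + c", simplified]) (auto simp: algebra_simps)

lemma oc_neg: "order_conv F x \<Longrightarrow> order_conv (filtermap uminus F) (- (x::'a::{ordered_real_vector,lattice}))"
  by (rule oc_lip[where f="uminus", simplified]) (auto simp: algebra_simps)

lemma sup_lip:
  fixes x y g c :: "'a::{ordered_real_vector,lattice}"
  assumes "0 \<le> g" "x - g \<le> y" "y \<le> x + g"
  shows "sup x c - g \<le> sup y c \<and> sup y c \<le> sup x c + g"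
proof
  have "sup x c - g = sup (x - g) (c - g)" using sup_add_r[of x c "-g"] by simp
  also have "\<dots> \<le> sup y c"
  proof (rule sup_least)
    show "x - g \<le> sup y c" using assms(2) by (rule le_supI1)
    show "c - g \<le> sup y c" using assms(1) by (intro le_supI2) simp
  qed
  finally show "sup x c - g \<le> sup y c" .
  have "sup y c \<le> sup (x + g) (c + g)"
  proof (rule sup_least)
    show "y \<le> sup (x + g) (c + g)" using assms(3) by (rule le_supI1)
    show "c \<le> sup (x + g) (c + g)" using assms(1) by (intro le_supI2) simp
  qed
  also have "\<dots> = sup x c + g" using sup_add_r[of x c g] by simp
  finally show "sup y c \<le> sup x c + g" .
qed

lemma inf_lip:
  fixes x y g c :: "'a::{ordered_real_vector,lattice}"
  assumes "0 \<le> g" "x - g \<le> y" "y \<le> x + g"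
  shows "inf x c - g \<le> inf y c \<and> inf y c \<le> inf x c + g"
proof
  have "inf x c - g = inf (x - g) (c - g)" using inf_add_r[of x c "-g"] by simp
  also have "\<dots> \<le> inf y c"
  proof (rule inf_greatest)
    show "inf (x - g) (c - g) \<le> y" using assms(2) by (rule le_infI1)
    show "inf (x - g) (c - g) \<le> c" using assms(1) by (intro le_infI2) simp
  qed
  finally show "inf x c - g \<le> inf y c" .
  have "inf y c \<le> inf (x + g) (c + g)"
  proof (rule inf_greatest)
    show "inf y c \<le> x + g" using assms(3) by (rule le_infI1)
    show "inf y c \<le> c + g" using assms(1) by (intro le_infI2) simp
  qed
  also have "\<dots> = inf x c + g" using inf_add_r[of x c g] by simp
  finally show "inf y c \<le> inf x c + g" .
qed

lemma oc_sup: "order_conv F x \<Longrightarrow> order_conv (filtermap (\<lambda>y. sup y c) F) (sup x (c::'a::{ordered_real_vector,lattice}))"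
  by (rule oc_lip[where f="\<lambda>y. sup y c", OF sup_lip])

lemma oc_inf: "order_conv F x \<Longrightarrow> order_conv (filtermap (\<lambda>y. inf y c) F) (inf x (c::'a::{ordered_real_vector,lattice}))"
  by (rule oc_lip[where f="\<lambda>y. inf y c", OF inf_lip])

lemma scale_bound:
  fixes d g :: "'a::{ordered_real_vector,lattice}"
  assumes s: "0 \<le> s" and g: "0 \<le> g" and d: "- g \<le> d" "d \<le> g"
  shows "- ((s+1) *\<^sub>R g) \<le> s *\<^sub>R d \<and> s *\<^sub>R d \<le> (s+1) *\<^sub>R g"
proof
  have "s *\<^sub>R d \<le> s *\<^sub>R g" using d(2) s by (rule scaleR_left_mono)
  also have "\<dots> \<le> (s+1) *\<^sub>R g" using g by (intro scaleR_right_mono) simp_all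
  finally show "s *\<^sub>R d \<le> (s+1) *\<^sub>R g" .
  have "- ((s+1) *\<^sub>R g) \<le> - (s *\<^sub>R g)" using g by (simp add: scaleR_right_mono)
  also have "\<dots> = s *\<^sub>R (- g)" by simp
  also have "\<dots> \<le> s *\<^sub>R d" using d(1) s by (rule scaleR_left_mono)
  finally show "- ((s+1) *\<^sub>R g) \<le> s *\<^sub>R d" .
qed

lemma scale_bound2:
  fixes d g :: "'a::{ordered_real_vector,lattice}"
  assumes g: "0 \<le> g" and d: "- g \<le> d" "d \<le> g"
  shows "- ((\<bar>r\<bar>+1) *\<^sub>R g) \<le> r *\<^sub>R d \<and> r *\<^sub>R d \<le> (\<bar>r\<bar>+1) *\<^sub>R g"
proof (cases "0 \<le> r")
  case True
  then show ?thesis using scale_bound[OF True g d] by simp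
next
  case False
  then have s: "0 \<le> - r" by simp
  have d': "- g \<le> - d" "- d \<le> g" using d by (simp_all add: minus_le_iff)
  have "r *\<^sub>R d = (- r) *\<^sub>R (- d)" by simp
  then show ?thesis using scale_bound[OF s g d'] False by simp
qed

lemma oc_scale:
  fixes x :: "'a::{ordered_real_vector,lattice}"
  assumes c: "order_conv F x"
  shows "order_conv (filtermap (\<lambda>y. r *\<^sub>R y) F) (r *\<^sub>R x)"
proof -
  obtain G where G: "is_inf_in UNIV G 0" "\<forall>g\<in>G. eventually (\<lambda>y. x - g \<le> y \<and> y \<le> x + g) F"
    using c unfolding order_conv_def by auto
  define k where "k = \<bar>r\<bar> + 1"
  have k: "0 < k" unfolding k_def by simp
  let ?G = "(\<lambda>g. k *\<^sub>R g) ` G"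
  have Gpos: "\<forall>g\<in>G. 0 \<le> g" using G(1) unfolding is_inf_in_def by auto
  have "is_inf_in UNIV ?G 0"
    unfolding is_inf_in_def
  proof (intro conjI ballI allI impI)
    show "0 \<in> (UNIV::'a set)" by simp
    fix g' assume "g' \<in> ?G"
    then show "0 \<le> g'" using Gpos k by (auto intro!: scaleR_nonneg_nonneg)
  next
    fix z :: 'a assume z: "\<forall>g'\<in>?G. z \<le> g'"
    have "(1/k) *\<^sub>R z \<le> g" if g: "g \<in> G" for g
    proof -
      have "(1/k) *\<^sub>R z \<le> (1/k) *\<^sub>R (k *\<^sub>R g)" using z g k by (intro scaleR_left_mono) auto
      then show ?thesis using k by simp
    qed
    then have "(1/k) *\<^sub>R z \<le> 0" using G(1) by (intro inf0) auto
    then have "k *\<^sub>R ((1/k) *\<^sub>R z) \<le> k *\<^sub>R 0" using k by (intro scaleR_left_mono) auto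
    then show "z \<le> 0" using k by simp
  qed
  moreover have "\<forall>g'\<in>?G. eventually (\<lambda>y. r *\<^sub>R x - g' \<le> y \<and> y \<le> r *\<^sub>R x + g') (filtermap (\<lambda>y. r *\<^sub>R y) F)"
  proof
    fix g' assume "g' \<in> ?G"
    then obtain g where g: "g \<in> G" "g' = k *\<^sub>R g" by auto
    have "eventually (\<lambda>y. r *\<^sub>R x - g' \<le> r *\<^sub>R y \<and> r *\<^sub>R y \<le> r *\<^sub>R x + g') F"
    proof (rule eventually_mono[of "\<lambda>y. x - g \<le> y \<and> y \<le> x + g" F])
      show "eventually (\<lambda>y. x - g \<le> y \<and> y \<le> x + g) F" using G(2) g(1) by blast
    next
      fix y assume y: "x - g \<le> y \<and> y \<le> x + g"
      have "- g \<le> y - x" "y - x \<le> g" using y by (simp_all add: algebra_simps)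
      then have "- (k *\<^sub>R g) \<le> r *\<^sub>R (y - x) \<and> r *\<^sub>R (y - x) \<le> k *\<^sub>R g"
        unfolding k_def using Gpos g(1) by (intro scale_bound2) auto
      then show "r *\<^sub>R x - g' \<le> r *\<^sub>R y \<and> r *\<^sub>R y \<le> r *\<^sub>R x + g'"
        using g(2) by (simp add: scaleR_diff_right algebra_simps)
    qed
    then show "eventually (\<lambda>y. r *\<^sub>R x - g' \<le> y \<and> y \<le> r *\<^sub>R x + g') (filtermap (\<lambda>y. r *\<^sub>R y) F)"
      by (simp add: eventually_filtermap)
  qed
  ultimately show ?thesis unfolding order_conv_def by blast
qed

lemma filtermap_const_nb: "F \<noteq> bot \<Longrightarrow> filtermap (\<lambda>_. c) F = principal {c}"
  by (simp add: filter_eq_iff eventually_filtermap eventually_principal eventually_const)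

lemma lsa_P0: "locally_solid_additive eta \<Longrightarrow> \<forall>x. eta (principal {x}) x"
  unfolding locally_solid_additive_def convergence_def by blast

lemma eta_add2:
  fixes a b :: "'b \<Rightarrow> 'a::{ordered_real_vector,lattice}"
  assumes L: "locally_solid_additive eta" and F: "F \<noteq> bot"
    and ca: "eta (filtermap a F) p" and cb: "eta (filtermap b F) q"
  shows "eta (filtermap (\<lambda>y. a y + b y) F) (p + q)"
proof -
  let ?H = "filtermap (\<lambda>y. (a y, b y)) F"
  have ax: "\<forall>(H::('a \<times> 'a) filter) f g. H \<noteq> bot \<and> eta (filtermap fst H) f \<and> eta (filtermap snd H) g
          \<longrightarrow> eta (filtermap (\<lambda>(x, y). x + y) H) (f + g)"
    using L unfolding locally_solid_additive_def by blast
  have "?H \<noteq> bot" using F by (simp add: filtermap_bot_iff)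
  moreover have "filtermap fst ?H = filtermap a F" by (simp add: filtermap_filtermap)
  moreover have "filtermap snd ?H = filtermap b F" by (simp add: filtermap_filtermap)
  moreover have "filtermap (\<lambda>(x, y). x + y) ?H = filtermap (\<lambda>y. a y + b y) F"
    by (simp add: filtermap_filtermap)
  ultimately show ?thesis using ax ca cb by metis
qed

lemma eta_solid:
  fixes a b :: "'b \<Rightarrow> 'a::{ordered_real_vector,lattice}"
  assumes L: "locally_solid_additive eta" and F: "F \<noteq> bot"
    and le: "\<And>y. vabs (a y) \<le> vabs (b y)" and cb: "eta (filtermap b F) 0"
  shows "eta (filtermap a F) 0"
proof -
  let ?H = "filtermap (\<lambda>y. (a y, b y)) F"
  have ax: "\<forall>H::('a \<times> 'a) filter. H \<noteq> bot \<and> eventually (\<lambda>(e, f). vabs e \<le> vabs f) H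
          \<and> eta (filtermap snd H) 0 \<longrightarrow> eta (filtermap fst H) 0"
    using L unfolding locally_solid_additive_def by blast
  have "?H \<noteq> bot" using F by (simp add: filtermap_bot_iff)
  moreover have "filtermap fst ?H = filtermap a F" by (simp add: filtermap_filtermap)
  moreover have "filtermap snd ?H = filtermap b F" by (simp add: filtermap_filtermap)
  moreover have "eventually (\<lambda>(e, f). vabs e \<le> vabs f) ?H"
    by (simp add: eventually_filtermap le)
  ultimately show ?thesis using ax cb by metis
qed

lemma eta_addc:
  fixes x c :: "'a::{ordered_real_vector,lattice}"
  assumes L: "locally_solid_additive eta" and F: "F \<noteq> bot" and c: "eta F x"
  shows "eta (filtermap (\<lambda>y. y + c) F) (x + c)"
proof -
  have "eta (filtermap (\<lambda>y. y) F) x" using c by simp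
  moreover have "eta (filtermap (\<lambda>_. c) F) c" using lsa_P0[OF L] F by (simp add: filtermap_const_nb)
  ultimately show ?thesis by (rule eta_add2[OF L F])
qed

lemma eta_lip:
  fixes x :: "'a::{ordered_real_vector,lattice}"
  assumes L: "locally_solid_additive eta" and F: "F \<noteq> bot" and c: "eta F x"
    and lip: "\<And>y. vabs (f y - f x) \<le> vabs (y - x)"
  shows "eta (filtermap f F) (f x)"
proof -
  have "eta (filtermap (\<lambda>y. y + (- x)) F) (x + (- x))" by (rule eta_addc[OF L F c])
  then have "eta (filtermap (\<lambda>y. y - x) F) 0" by simp
  then have "eta (filtermap (\<lambda>y. f y - f x) F) 0" by (rule eta_solid[OF L F lip])
  moreover have "filtermap (\<lambda>y. f y - f x) F \<noteq> bot" using F by (simp add: filtermap_bot_iff)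
  ultimately have "eta (filtermap (\<lambda>z. z + f x) (filtermap (\<lambda>y. f y - f x) F)) (0 + f x)"
    by (intro eta_addc[OF L]) auto
  then show ?thesis by (simp add: filtermap_filtermap)
qed

lemma vabs_le_g:
  fixes d g :: "'a::{ordered_real_vector,lattice}"
  shows "- vabs d \<le> d" "d \<le> vabs d"
  using vabs_ge[of d] by (simp_all add: minus_le_iff)

lemma vabs_diff_le:
  fixes a b g :: "'a::{ordered_real_vector,lattice}"
  assumes "a - g \<le> b" "b \<le> a + g"
  shows "vabs (b - a) \<le> g"
  using assms by (intro vabs_le) (simp_all add: algebra_simps)

lemma eta_sup:
  fixes x c :: "'a::{ordered_real_vector,lattice}"
  assumes L: "locally_solid_additive eta" and F: "F \<noteq> bot" and c: "eta F x"
  shows "eta (filtermap (\<lambda>y. sup y c) F) (sup x c)"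
proof (rule eta_lip[OF L F c])
  fix y
  have "x - vabs (y - x) \<le> y" "y \<le> x + vabs (y - x)"
    using vabs_le_g[of "y - x"] by (simp_all add: algebra_simps)
  then have "sup x c - vabs (y - x) \<le> sup y c \<and> sup y c \<le> sup x c + vabs (y - x)"
    using vabs_nonneg by (intro sup_lip) auto
  then show "vabs (sup y c - sup x c) \<le> vabs (y - x)"
    by (elim conjE) (rule vabs_diff_le)
qed

lemma eta_inf:
  fixes x c :: "'a::{ordered_real_vector,lattice}"
  assumes L: "locally_solid_additive eta" and F: "F \<noteq> bot" and c: "eta F x"
  shows "eta (filtermap (\<lambda>y. inf y c) F) (inf x c)"
proof (rule eta_lip[OF L F c])
  fix y
  have "x - vabs (y - x) \<le> y" "y \<le> x + vabs (y - x)"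
    using vabs_le_g[of "y - x"] by (simp_all add: algebra_simps)
  then have "inf x c - vabs (y - x) \<le> inf y c \<and> inf y c \<le> inf x c + vabs (y - x)"
    using vabs_nonneg by (intro inf_lip) auto
  then show "vabs (inf y c - inf x c) \<le> vabs (y - x)"
    by (elim conjE) (rule vabs_diff_le)
qed

lemma eta_scale:
  fixes x :: "'a::{ordered_real_vector,lattice}"
  assumes L: "locally_solid_additive eta" and F: "F \<noteq> bot" and c: "eta F x"
  shows "eta (filtermap (\<lambda>y. r *\<^sub>R y) F) (r *\<^sub>R x)"
proof -
  have "eta (filtermap (\<lambda>y. y + (- x)) F) (x + (- x))" by (rule eta_addc[OF L F c])
  then have d0: "eta (filtermap (\<lambda>y. y - x) F) 0" by simp
  have v0: "eta (filtermap (\<lambda>y. vabs (y - x)) F) 0"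
  proof (rule eta_solid[OF L F _ d0])
    fix y show "vabs (vabs (y - x)) \<le> vabs (y - x)" by (simp add: vabs_pos vabs_nonneg)
  qed
  have nv: "eta (filtermap (\<lambda>y. real n *\<^sub>R vabs (y - x)) F) 0" for n
  proof (induction n)
    case 0
    then show ?case using lsa_P0[OF L] F by (simp add: filtermap_const_nb)
  next
    case (Suc n)
    have "eta (filtermap (\<lambda>y. real n *\<^sub>R vabs (y - x) + vabs (y - x)) F) (0 + 0)"
      by (rule eta_add2[OF L F Suc v0])
    then show ?case by (simp add: scaleR_left_distrib algebra_simps)
  qed
  obtain n :: nat where n: "\<bar>r\<bar> + 1 \<le> real n" using real_arch_simple by blast
  have "eta (filtermap (\<lambda>y. r *\<^sub>R y - r *\<^sub>R x) F) 0"
  proof (rule eta_solid[OF L F _ nv[of n]])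
    fix y
    have b: "- ((\<bar>r\<bar>+1) *\<^sub>R vabs (y - x)) \<le> r *\<^sub>R (y - x) \<and> r *\<^sub>R (y - x) \<le> (\<bar>r\<bar>+1) *\<^sub>R vabs (y - x)"
      using vabs_nonneg vabs_le_g by (intro scale_bound2) auto
    have m: "(\<bar>r\<bar>+1) *\<^sub>R vabs (y - x) \<le> real n *\<^sub>R vabs (y - x)"
      using n vabs_nonneg by (intro scaleR_right_mono) auto
    have nn: "0 \<le> real n *\<^sub>R vabs (y - x)" using vabs_nonneg by (intro scaleR_nonneg_nonneg) auto
    have "vabs (r *\<^sub>R (y - x)) \<le> real n *\<^sub>R vabs (y - x)"
    proof (rule vabs_le)
      show "r *\<^sub>R (y - x) \<le> real n *\<^sub>R vabs (y - x)" using b m by (blast intro: order_trans)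
      have "- (r *\<^sub>R (y - x)) \<le> (\<bar>r\<bar>+1) *\<^sub>R vabs (y - x)" using b by (simp add: minus_le_iff)
      then show "- (r *\<^sub>R (y - x)) \<le> real n *\<^sub>R vabs (y - x)" using m by (rule order_trans)
    qed
    then show "vabs (r *\<^sub>R y - r *\<^sub>R x) \<le> vabs (real n *\<^sub>R vabs (y - x))"
      using nn by (simp add: vabs_pos scaleR_diff_right)
  qed
  moreover have "filtermap (\<lambda>y. r *\<^sub>R y - r *\<^sub>R x) F \<noteq> bot" using F by (simp add: filtermap_bot_iff)
  ultimately have "eta (filtermap (\<lambda>z. z + r *\<^sub>R x) (filtermap (\<lambda>y. r *\<^sub>R y - r *\<^sub>R x) F)) (0 + r *\<^sub>R x)"
    by (intro eta_addc[OF L]) auto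
  then show ?thesis by (simp add: filtermap_filtermap)
qed

lemma sl_facts:
  fixes E :: "'a::{ordered_real_vector,lattice} set"
  assumes "sublattice E"
  shows sl_0: "0 \<in> E"
    and sl_add: "x \<in> E \<Longrightarrow> y \<in> E \<Longrightarrow> x + y \<in> E"
    and sl_sup: "x \<in> E \<Longrightarrow> y \<in> E \<Longrightarrow> sup x y \<in> E"
    and sl_inf: "x \<in> E \<Longrightarrow> y \<in> E \<Longrightarrow> inf x y \<in> E"
    and sl_scale: "x \<in> E \<Longrightarrow> c *\<^sub>R x \<in> E"
  using assms unfolding sublattice_def by auto

lemma sl_neg:
  fixes E :: "'a::{ordered_real_vector,lattice} set"
  assumes "sublattice E" "x \<in> E" shows "- x \<in> E"
  using sl_scale[OF assms, of "-1"] by simp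

lemma sl_diff:
  fixes E :: "'a::{ordered_real_vector,lattice} set"
  assumes "sublattice E" "x \<in> E" "y \<in> E" shows "x - y \<in> E"
  using sl_add[OF assms(1,2) sl_neg[OF assms(1,3)]] by simp

lemma key:
  fixes E :: "'a::{ordered_real_vector,lattice} set"
  assumes arch: "archimedean_vl TYPE('a)" and R: "regular_sublattice E"
    and PhiE: "Phi \<subseteq> E" and phi0: "phi0 \<in> Phi"
    and p0: "p0 \<in> E" "\<forall>f\<in>Phi. p0 \<le> f"
    and y: "\<forall>f\<in>Phi. y \<le> f"
    and v: "\<forall>p\<in>E. (\<forall>f\<in>Phi. p \<le> f) \<longrightarrow> p \<le> v"
  shows "y \<le> v"
proof -
  have S: "sublattice E" using R unfolding regular_sublattice_def by auto
  define D where "D = {f - p | f p. f \<in> Phi \<and> p \<in> E \<and> (\<forall>f'\<in>Phi. p \<le> f')}"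
  have DE: "D \<subseteq> E" unfolding D_def using PhiE sl_diff[OF S] by blast
  have Dpos: "\<forall>d\<in>D. 0 \<le> d" unfolding D_def by auto
  have "is_inf_in E D 0"
    unfolding is_inf_in_def
  proof (intro conjI ballI impI)
    show "0 \<in> E" by (rule sl_0[OF S])
    show "\<And>d. d \<in> D \<Longrightarrow> 0 \<le> d" using Dpos by auto
    fix z assume zE: "z \<in> E" and zlb: "\<forall>d\<in>D. z \<le> d"
    define w where "w = sup z 0"
    have wE: "w \<in> E" unfolding w_def using zE sl_0[OF S] sl_sup[OF S] by blast
    have w0: "0 \<le> w" unfolding w_def by simp
    have wlb: "\<forall>d\<in>D. w \<le> d" unfolding w_def using zlb Dpos by auto
    have lbn: "p0 + real n *\<^sub>R w \<in> E \<and> (\<forall>f\<in>Phi. p0 + real n *\<^sub>R w \<le> f)" for n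
    proof (induction n)
      case 0
      then show ?case using p0 by simp
    next
      case (Suc n)
      let ?q = "p0 + real n *\<^sub>R w"
      have qE: "?q \<in> E" and ql: "\<forall>f\<in>Phi. ?q \<le> f" using Suc by auto
      have eq: "p0 + real (Suc n) *\<^sub>R w = ?q + w" by (simp add: algebra_simps)
      have "?q + w \<in> E" using qE wE by (rule sl_add[OF S])
      moreover have "\<forall>f\<in>Phi. ?q + w \<le> f"
      proof
        fix f assume f: "f \<in> Phi"
        have "f - ?q \<in> D" unfolding D_def using f qE ql by blast
        then have "w \<le> f - ?q" using wlb by blast
        then show "?q + w \<le> f" by (simp add: algebra_simps le_diff_eq)
      qed
      ultimately show ?case unfolding eq by blast
    qed
    have "real n *\<^sub>R w \<le> phi0 - p0" for n
      using lbn[of n] phi0 by (auto simp: algebra_simps le_diff_eq)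
    then have "w = 0" using arch w0 unfolding archimedean_vl_def by blast
    then show "z \<le> 0" unfolding w_def by (metis sup_ge1)
  qed
  then have "is_inf_in UNIV D 0" using R DE unfolding regular_sublattice_def by blast
  moreover have "\<forall>d\<in>D. y - v \<le> d"
  proof
    fix d assume "d \<in> D"
    then obtain f p where d: "d = f - p" "f \<in> Phi" "p \<in> E" "\<forall>f'\<in>Phi. p \<le> f'" unfolding D_def by blast
    have "y \<le> f" "p \<le> v" using y v d by auto
    then show "y - v \<le> d" using d(1) by (simp add: diff_mono)
  qed
  ultimately have "y - v \<le> 0" by (rule inf0)
  then show ?thesis by simp
qed

definition SA :: "'a::{ordered_real_vector,lattice} set \<Rightarrow> 'a \<Rightarrow> bool" where
  "SA E y \<longleftrightarrow> (\<forall>u. (\<forall>e\<in>E. e \<le> y \<longrightarrow> e \<le> u) \<longrightarrow> y \<le> u)"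

definition IA :: "'a::{ordered_real_vector,lattice} set \<Rightarrow> 'a \<Rightarrow> bool" where
  "IA E y \<longleftrightarrow> (\<forall>u. (\<forall>e\<in>E. y \<le> e \<longrightarrow> u \<le> e) \<longrightarrow> u \<le> y)"

definition BB :: "'a::{ordered_real_vector,lattice} set \<Rightarrow> 'a set" where
  "BB E = {x. (\<forall>a\<in>E. SA E (sup x a)) \<and> (\<forall>a\<in>E. IA E (inf x a))}"

lemma SA_neg:
  fixes E :: "'a::{ordered_real_vector,lattice} set"
  assumes S: "sublattice E" and IA: "IA E y"
  shows "SA E (- y)"
  unfolding SA_def
proof (intro allI impI)
  fix u assume u: "\<forall>e\<in>E. e \<le> - y \<longrightarrow> e \<le> u"
  have "\<forall>e\<in>E. y \<le> e \<longrightarrow> - u \<le> e"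
  proof (intro ballI impI)
    fix e assume e: "e \<in> E" "y \<le> e"
    then have "- e \<le> u" using u sl_neg[OF S] by auto
    then show "- u \<le> e" by (simp add: minus_le_iff)
  qed
  then have "- u \<le> y" using IA unfolding IA_def by blast
  then show "- y \<le> u" by (simp add: minus_le_iff)
qed

lemma IA_neg:
  fixes E :: "'a::{ordered_real_vector,lattice} set"
  assumes S: "sublattice E" and SA: "SA E (- y)"
  shows "IA E y"
  unfolding IA_def
proof (intro allI impI)
  fix u assume u: "\<forall>e\<in>E. y \<le> e \<longrightarrow> u \<le> e"
  have "\<forall>e\<in>E. e \<le> - y \<longrightarrow> e \<le> - u"
  proof (intro ballI impI)
    fix e assume e: "e \<in> E" "e \<le> - y"
    have "y \<le> - e" using e(2) by (simp add: le_minus_iff)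
    then have "u \<le> - e" using u sl_neg[OF S e(1)] by blast
    then show "e \<le> - u" by (simp add: le_minus_iff)
  qed
  then have "- y \<le> - u" using SA unfolding SA_def by blast
  then show "u \<le> y" by simp
qed

lemma BB_neg:
  fixes E :: "'a::{ordered_real_vector,lattice} set"
  assumes S: "sublattice E" and x: "x \<in> BB E"
  shows "- x \<in> BB E"
  unfolding BB_def
proof (intro CollectI conjI ballI)
  fix a assume a: "a \<in> E"
  have "IA E (inf x (- a))" using x sl_neg[OF S a] unfolding BB_def by blast
  then have "SA E (- inf x (- a))" by (rule SA_neg[OF S])
  then show "SA E (sup (- x) a)" by (simp add: neg_inf)
  have "SA E (sup x (- a))" using x sl_neg[OF S a] unfolding BB_def by blast
  moreover have "sup x (- a) = - inf (- x) a" by (simp add: neg_inf)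
  ultimately show "IA E (inf (- x) a)" using IA_neg[OF S] by metis
qed

lemma E_BB:
  fixes E :: "'a::{ordered_real_vector,lattice} set"
  assumes S: "sublattice E"
  shows "E \<subseteq> BB E"
proof
  fix x assume x: "x \<in> E"
  have "SA E (sup x a)" if a: "a \<in> E" for a
    unfolding SA_def using sl_sup[OF S x a] by blast
  moreover have "IA E (inf x a)" if a: "a \<in> E" for a
    unfolding IA_def using sl_inf[OF S x a] by blast
  ultimately show "x \<in> BB E" unfolding BB_def by blast
qed

lemma IA_sup:
  fixes E :: "'a::{ordered_real_vector,lattice} set"
  assumes IA: "IA E c" and h: "\<forall>f\<in>E. c \<le> f \<longrightarrow> p \<le> sup f a"
  shows "p \<le> sup c a"
proof -
  have "\<forall>f\<in>E. c \<le> f \<longrightarrow> p + inf c a - a \<le> f"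
  proof (intro ballI impI)
    fix f assume f: "f \<in> E" "c \<le> f"
    have "p + inf f a \<le> sup f a + inf f a" using h f by (simp add: add_right_mono)
    also have "\<dots> = f + a" using inf_plus_sup[of f a] by (simp add: add.commute)
    finally have 1: "p + inf f a \<le> f + a" .
    have "inf c a \<le> inf f a" using f(2) by (simp add: le_infI1)
    then have "p + inf c a \<le> p + inf f a" by (rule add_left_mono)
    then have "p + inf c a \<le> f + a" using 1 by (rule order_trans)
    then show "p + inf c a - a \<le> f" by (simp add: diff_le_eq)
  qed
  then have "p + inf c a - a \<le> c" using IA unfolding IA_def by blast
  then have "p \<le> c + a - inf c a" by (simp add: algebra_simps le_diff_eq diff_le_eq)
  also have "c + a - inf c a = sup c a" using inf_plus_sup[of c a] by (simp add: algebra_simps)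
  finally show ?thesis .
qed

lemma SA_inf:
  fixes E :: "'a::{ordered_real_vector,lattice} set"
  assumes SA: "SA E s" and h: "\<forall>l\<in>E. l \<le> s \<longrightarrow> inf w l \<le> M"
  shows "inf w s \<le> M"
proof -
  have "\<forall>l\<in>E. l \<le> s \<longrightarrow> l \<le> M + sup s w - w"
  proof (intro ballI impI)
    fix l assume l: "l \<in> E" "l \<le> s"
    have "l = inf l w + sup l w - w" using inf_plus_sup[of l w] by (simp add: algebra_simps)
    also have "\<dots> \<le> M + sup s w - w"
    proof -
      have "inf l w \<le> M" using h l by (simp add: inf_commute)
      moreover have "sup l w \<le> sup s w" using l(2) by (simp add: le_supI1)
      ultimately show ?thesis by (simp add: add_mono diff_right_mono)
    qed
    finally show "l \<le> M + sup s w - w" .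
  qed
  then have "s \<le> M + sup s w - w" using SA unfolding SA_def by blast
  then have "s + w - sup s w \<le> M" by (simp add: algebra_simps le_diff_eq diff_le_eq)
  moreover have "s + w - sup s w = inf w s" using inf_plus_sup[of s w] by (simp add: algebra_simps inf_commute)
  ultimately show ?thesis by simp
qed

lemma closed_sup_half:
  fixes E :: "'a::{ordered_real_vector,lattice} set"
  assumes arch: "archimedean_vl TYPE('a)" and R: "regular_sublattice E"
    and x: "x \<in> adherence order_conv (BB E)" and a: "a \<in> E"
  shows "SA E (sup x a)"
proof -
  have S: "sublattice E" using R unfolding regular_sublattice_def by auto
  obtain Fl where Fl: "Fl \<noteq> bot" "eventually (\<lambda>z. z \<in> BB E) Fl" "order_conv Fl x"
    using x unfolding adherence_def by auto
  obtain G0 where G0: "is_inf_in UNIV G0 0" "\<forall>g\<in>G0. eventually (\<lambda>z. x - g \<le> z \<and> z \<le> x + g) Fl"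
    using Fl(3) unfolding order_conv_def by auto
  have G0pos: "\<forall>g\<in>G0. 0 \<le> g" using G0(1) unfolding is_inf_in_def by auto
  show ?thesis unfolding SA_def
  proof (intro allI impI)
    fix u assume u: "\<forall>e\<in>E. e \<le> sup x a \<longrightarrow> e \<le> u"
    have au: "a \<le> u" using u a by auto
    have main: "sup x a - u \<le> g" if g: "g \<in> G0" for g
    proof -
      have g0: "0 \<le> g" using g G0pos by auto
      define T where "T = {z. z \<in> BB E \<and> x - g \<le> z}"
      have evT: "eventually (\<lambda>z. z \<in> T) Fl"
        unfolding T_def using Fl(2) G0(2) g by (auto elim: eventually_elim2)
      obtain z0 where z0: "z0 \<in> T" using eventually_happens'[OF Fl(1) evT] by blast
      have step: "inf (x - g) l \<le> u" if l: "l \<in> E" "l \<le> sup z0 a" for l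
      proof -
        define b where "b = sup l a"
        have bE: "b \<in> E" unfolding b_def using l(1) a by (rule sl_sup[OF S])
        define Phi where "Phi = {sup f a | f z. z \<in> T \<and> f \<in> E \<and> inf z b \<le> f}"
        have PhiE: "Phi \<subseteq> E" unfolding Phi_def using a sl_sup[OF S] by blast
        have phi0: "sup b a \<in> Phi" unfolding Phi_def using z0 bE by fastforce
        have p0: "\<forall>f\<in>Phi. a \<le> f" unfolding Phi_def by auto
        have ylb: "\<forall>f\<in>Phi. sup (inf (x - g) b) a \<le> f"
        proof
          fix f assume "f \<in> Phi"
          then obtain f' z where f: "f = sup f' a" "z \<in> T" "inf z b \<le> f'" unfolding Phi_def by blast
          have "inf (x - g) b \<le> inf z b" using f(2) unfolding T_def by (intro inf_mono) simp_all
          then have "inf (x - g) b \<le> f'" using f(3) by (rule order_trans)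
          then show "sup (inf (x - g) b) a \<le> f" unfolding f(1) by (rule sup_mono) simp
        qed
        have vub: "\<forall>p\<in>E. (\<forall>f\<in>Phi. p \<le> f) \<longrightarrow> p \<le> u"
        proof (intro ballI impI)
          fix p assume pE: "p \<in> E" and plb: "\<forall>f\<in>Phi. p \<le> f"
          have "p - sup x a \<le> g'" if g': "g' \<in> G0" for g'
          proof -
            have "eventually (\<lambda>z. z \<in> T \<and> z \<le> x + g') Fl"
              using evT G0(2) g' by (auto elim: eventually_elim2)
            then obtain z where z: "z \<in> T" "z \<le> x + g'" using eventually_happens'[OF Fl(1)] by blast
            have IAz: "IA E (inf z b)" using z(1) bE unfolding T_def BB_def by blast
            have "p \<le> sup (inf z b) a"
            proof (rule IA_sup[OF IAz])
              show "\<forall>f\<in>E. inf z b \<le> f \<longrightarrow> p \<le> sup f a"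
                using plb z(1) unfolding Phi_def by blast
            qed
            also have "\<dots> \<le> sup z a" by (rule sup_mono) simp_all
            also have "\<dots> \<le> sup (x + g') a" using z(2) by (rule sup_mono) simp
            also have "\<dots> \<le> sup x a + g'"
            proof -
              have "0 \<le> g'" using g' G0pos by auto
              then have "- g' \<le> 0" by simp
              then have "- g' \<le> g'" using \<open>0 \<le> g'\<close> by (rule order_trans)
              then have "x - g' \<le> x + g'" by (metis add_left_mono diff_conv_add_uminus)
              then show ?thesis using sup_lip[of g' x "x + g'" a] \<open>0 \<le> g'\<close> by simp
            qed
            finally show ?thesis by (simp add: diff_le_eq add.commute)
          qed
          then have "p - sup x a \<le> 0" using G0(1) by (intro inf0) auto
          then have "p \<le> sup x a" by simp
          then show "p \<le> u" using u pE by blast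
        qed
        have "sup (inf (x - g) b) a \<le> u"
          by (rule key[OF arch R PhiE phi0 _ p0 ylb vub]) (rule a)
        moreover have "inf (x - g) l \<le> sup (inf (x - g) b) a"
        proof -
          have "inf (x - g) l \<le> inf (x - g) b" unfolding b_def by (rule inf_mono) simp_all
          then show ?thesis by (rule le_supI1)
        qed
        ultimately show ?thesis by (meson order_trans)
      qed
      have SAz0: "SA E (sup z0 a)" using z0 a unfolding T_def BB_def by blast
      have "inf (x - g) (sup z0 a) \<le> u"
        by (rule SA_inf[OF SAz0]) (use step in blast)
      moreover have "inf (x - g) (sup z0 a) = x - g"
      proof -
        have "x - g \<le> z0" using z0 unfolding T_def by simp
        then have "x - g \<le> sup z0 a" by (rule le_supI1)
        then show ?thesis by (rule inf_absorb1)
      qed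
      ultimately have "x - g \<le> u" by simp
      then have "sup (x - g) a \<le> u" using au by simp
      moreover have "sup x a - g \<le> sup (x - g) a"
      proof -
        have "sup x a - g = sup (x - g) (a - g)" using sup_add_r[of x a "- g"] by simp
        also have "\<dots> \<le> sup (x - g) a" using g0 by (intro sup_mono) simp_all
        finally show ?thesis .
      qed
      ultimately have "sup x a - g \<le> u" by (rule order_trans[rotated])
      then show ?thesis by (simp add: algebra_simps diff_le_eq le_diff_eq)
    qed
    have "sup x a - u \<le> 0" using G0(1) main by (intro inf0) auto
    then show "sup x a \<le> u" by simp
  qed
qed

lemma BB_closed:
  fixes E :: "'a::{ordered_real_vector,lattice} set"
  assumes arch: "archimedean_vl TYPE('a)" and R: "regular_sublattice E"
  shows "adherence order_conv (BB E) \<subseteq> BB E"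
proof
  have S: "sublattice E" using R unfolding regular_sublattice_def by auto
  fix x assume x: "x \<in> adherence order_conv (BB E)"
  have "SA E (sup x a)" if a: "a \<in> E" for a by (rule closed_sup_half[OF arch R x a])
  moreover have "IA E (inf x a)" if a: "a \<in> E" for a
  proof -
    obtain Fl where Fl: "Fl \<noteq> bot" "eventually (\<lambda>z. z \<in> BB E) Fl" "order_conv Fl x"
      using x unfolding adherence_def by auto
    have "filtermap uminus Fl \<noteq> bot" using Fl(1) by (simp add: filtermap_bot_iff)
    moreover have "eventually (\<lambda>z. z \<in> BB E) (filtermap uminus Fl)"
      using Fl(2) unfolding eventually_filtermap by (auto elim!: eventually_mono intro: BB_neg[OF S])
    moreover have "order_conv (filtermap uminus Fl) (- x)" using Fl(3) by (rule oc_neg)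
    ultimately have "- x \<in> adherence order_conv (BB E)" unfolding adherence_def by blast
    then have "SA E (sup (- x) (- a))" using sl_neg[OF S a] by (intro closed_sup_half[OF arch R])
    then have "SA E (- inf x a)" by (simp add: neg_inf)
    then show ?thesis by (rule IA_neg[OF S])
  qed
  ultimately show "x \<in> BB E" unfolding BB_def by blast
qed

lemma BB_dense:
  fixes E :: "'a::{ordered_real_vector,lattice} set"
  assumes S: "sublattice E" and x: "x \<in> BB E" and pos: "0 < x"
  shows "\<exists>e\<in>E. 0 < e \<and> e \<le> x"
proof -
  have "SA E (sup x 0)" using x sl_0[OF S] unfolding BB_def by blast
  moreover have "sup x 0 = x" using pos by (simp add: sup_absorb1)
  ultimately have SAx: "SA E x" by simp
  have "\<exists>l\<in>E. l \<le> x \<and> \<not> l \<le> 0"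
  proof (rule ccontr)
    assume "\<not> ?thesis"
    then have "\<forall>e\<in>E. e \<le> x \<longrightarrow> e \<le> 0" by blast
    then have "x \<le> 0" using SAx unfolding SA_def by blast
    then show False using pos by simp
  qed
  then obtain l where l: "l \<in> E" "l \<le> x" "\<not> l \<le> 0" by blast
  let ?e = "sup l 0"
  have "?e \<in> E" using l(1) sl_0[OF S] by (rule sl_sup[OF S])
  moreover have "0 < ?e"
  proof -
    have "0 \<le> ?e" by simp
    moreover have "?e \<noteq> 0" using l(3) by (metis sup_ge1)
    ultimately show ?thesis by (simp add: order_less_le)
  qed
  moreover have "?e \<le> x" using l(2) pos by simp
  ultimately show ?thesis by blast
qed

lemma BB_regular:
  fixes E :: "'a::{ordered_real_vector,lattice} set"
  assumes R: "regular_sublattice E" and EK: "E \<subseteq> K" and KB: "K \<subseteq> BB E"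
    and GK: "G \<subseteq> K" and inf: "is_inf_in K G 0"
  shows "is_inf_in UNIV G 0"
proof -
  have S: "sublattice E" using R unfolding regular_sublattice_def by auto
  have Gpos: "\<forall>g\<in>G. 0 \<le> g" and Klb: "\<forall>y\<in>K. (\<forall>g\<in>G. y \<le> g) \<longrightarrow> y \<le> 0"
    using inf unfolding is_inf_in_def by auto
  have "z \<le> 0" if zlb: "\<forall>g\<in>G. z \<le> g" for z
  proof (cases "G = {}")
    case True
    have "is_inf_in E G 0" unfolding is_inf_in_def using True Klb EK sl_0[OF S] by auto
    then have "is_inf_in UNIV G 0" using R True unfolding regular_sublattice_def by auto
    then show ?thesis using zlb unfolding is_inf_in_def by auto
  next
    case False
    define w where "w = sup z 0"
    have w0: "0 \<le> w" unfolding w_def by simp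
    have wlb: "\<forall>g\<in>G. w \<le> g" unfolding w_def using zlb Gpos by simp
    have stepA: "inf w a = 0" if a: "a \<in> E" "0 \<le> a" for a
    proof -
      define Phi where "Phi = {f \<in> E. \<exists>g\<in>G. inf g a \<le> f}"
      have PhiE: "Phi \<subseteq> E" unfolding Phi_def by blast
      have Rr: "\<forall>G. G \<subseteq> E \<longrightarrow> is_inf_in E G 0 \<longrightarrow> is_inf_in UNIV G 0"
        using R unfolding regular_sublattice_def by blast
      show ?thesis
      proof (cases "is_inf_in E Phi 0")
        case True
        then have "is_inf_in UNIV Phi 0" using Rr PhiE by blast
        moreover have "\<forall>f\<in>Phi. inf w a \<le> f"
        proof
          fix f assume "f \<in> Phi"
          then obtain g where g: "g \<in> G" "inf g a \<le> f" unfolding Phi_def by blast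
          have "inf w a \<le> inf g a" using wlb g(1) by (intro inf_mono) simp_all
          then show "inf w a \<le> f" using g(2) by (rule order_trans)
        qed
        ultimately have "inf w a \<le> 0" by (rule inf0)
        moreover have "0 \<le> inf w a" using w0 a(2) by simp
        ultimately show ?thesis by simp
      next
        case False
        have "\<forall>f\<in>Phi. 0 \<le> f"
        proof
          fix f assume "f \<in> Phi"
          then obtain g where g: "g \<in> G" "inf g a \<le> f" unfolding Phi_def by blast
          have "0 \<le> inf g a" using Gpos g(1) a(2) by simp
          then show "0 \<le> f" using g(2) by (rule order_trans)
        qed
        have "\<exists>y\<in>E. (\<forall>f\<in>Phi. y \<le> f) \<and> \<not> y \<le> 0"
        proof (rule ccontr)
          assume "\<not> ?thesis"
          then have "is_inf_in E Phi 0" unfolding is_inf_in_def using sl_0[OF S] \<open>\<forall>f\<in>Phi. 0 \<le> f\<close> by blast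
          then show False using False by blast
        qed
        then obtain y where y: "y \<in> E" "\<forall>f\<in>Phi. y \<le> f" "\<not> y \<le> 0" by blast
        have "y \<le> g" if g: "g \<in> G" for g
        proof -
          have "IA E (inf g a)" using g GK KB a(1) unfolding BB_def by blast
          moreover have "\<forall>e\<in>E. inf g a \<le> e \<longrightarrow> y \<le> e" using y(2) g unfolding Phi_def by blast
          ultimately have "y \<le> inf g a" unfolding IA_def by blast
          then show ?thesis by (meson inf_le1 order_trans)
        qed
        then have "\<forall>g\<in>G. sup y 0 \<le> g" using Gpos by simp
        moreover have "sup y 0 \<in> K" using sl_sup[OF S y(1) sl_0[OF S]] EK by blast
        ultimately have "sup y 0 \<le> 0" using Klb by blast
        then have "y \<le> 0" by simp
        then show ?thesis using y(3) by simp
      qed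
    qed
    obtain g where g: "g \<in> G" using False by blast
    have g0: "0 \<le> g" using g Gpos by auto
    have "SA E (sup g 0)" using g GK KB sl_0[OF S] unfolding BB_def by blast
    then have SAg: "SA E g" using g0 by (simp add: sup_absorb1)
    have "\<forall>l\<in>E. l \<le> g \<longrightarrow> l \<le> g - w"
    proof (intro ballI impI)
      fix l assume l: "l \<in> E" "l \<le> g"
      let ?lp = "sup l 0"
      have lpE: "?lp \<in> E" using sl_sup[OF S l(1) sl_0[OF S]] .
      have "inf w ?lp = 0" using lpE by (intro stepA) simp_all
      then have "?lp + w = sup ?lp w" using inf_plus_sup[of ?lp w] by (simp add: inf_commute)
      also have "\<dots> \<le> g" using l(2) g0 wlb g by simp
      finally have "?lp + w \<le> g" .
      moreover have "l + w \<le> ?lp + w" by (simp add: add_right_mono)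
      ultimately have "l + w \<le> g" by (rule order_trans[rotated])
      then show "l \<le> g - w" by (simp add: le_diff_eq)
    qed
    then have "g \<le> g - w" using SAg unfolding SA_def by blast
    then have "w \<le> 0" by simp
    then show ?thesis unfolding w_def by simp
  qed
  then show ?thesis unfolding is_inf_in_def using Gpos by auto
qed

theorem corollary9p5:
  fixes eta :: "'a::{ordered_real_vector,lattice} filter \<Rightarrow> 'a \<Rightarrow> bool"
    and E :: "'a set"
  assumes "archimedean_vl TYPE('a)"
    and "locally_solid_additive eta"
    and "sturdy eta"
    and "regular_sublattice E"
  shows "order_dense_in E (conv_closure eta E) \<and> regular_sublattice (conv_closure eta E)"
proof -
  note arch = assms(1) and L = assms(2) and St = assms(3) and R = assms(4)
  have S: "sublattice E" using R unfolding regular_sublattice_def by auto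
  let ?O = "conv_closure order_conv E"
  let ?C = "conv_closure eta E"
  have P0o: "\<forall>x::'a. order_conv (principal {x}) x" using oc_principal by blast
  have P0e: "\<forall>x. eta (principal {x}) x" by (rule lsa_P0[OF L])
  have Osl: "sublattice ?O"
  proof (rule closure_sublattice[of order_conv, OF P0o _ _ _ _ S])
    show "\<And>F x c. F \<noteq> bot \<Longrightarrow> order_conv F x \<Longrightarrow> order_conv (filtermap (\<lambda>y. y + c) F) (x + c)"
      by (rule oc_add)
    show "\<And>F x c. F \<noteq> bot \<Longrightarrow> order_conv F x \<Longrightarrow> order_conv (filtermap (\<lambda>y. sup y c) F) (sup x c)"
      by (rule oc_sup)
    show "\<And>F x c. F \<noteq> bot \<Longrightarrow> order_conv F x \<Longrightarrow> order_conv (filtermap (\<lambda>y. inf y c) F) (inf x c)"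
      by (rule oc_inf)
    show "\<And>F x r. F \<noteq> bot \<Longrightarrow> order_conv F x \<Longrightarrow> order_conv (filtermap (\<lambda>y. r *\<^sub>R y) F) (r *\<^sub>R x)"
      by (rule oc_scale)
  qed
  have EO: "E \<subseteq> ?O" by (rule closure_sub)
  have OB: "?O \<subseteq> BB E"
  proof (rule closure_least)
    show "conv_closed order_conv (BB E)" using BB_closed[OF arch R] by (rule closedI[of order_conv, OF P0o])
    show "E \<subseteq> BB E" by (rule E_BB[OF S])
  qed
  have Oreg: "regular_sublattice ?O"
    unfolding regular_sublattice_def
  proof (intro conjI allI impI)
    show "sublattice ?O" by (rule Osl)
    fix G assume "G \<subseteq> ?O" "is_inf_in ?O G 0"
    then show "is_inf_in UNIV G 0" using BB_regular[OF R EO OB] by blast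
  qed
  have "adherence eta ?O \<subseteq> conv_closure order_conv ?O" using St Oreg unfolding sturdy_def by blast
  also have "conv_closure order_conv ?O \<subseteq> ?O"
    by (rule closure_least[OF closure_closed[of order_conv, OF P0o]]) simp
  finally have "conv_closed eta ?O" by (rule closedI[of eta, OF P0e])
  then have CO: "?C \<subseteq> ?O" using EO by (rule closure_least)
  have EC: "E \<subseteq> ?C" by (rule closure_sub)
  have Csl: "sublattice ?C"
  proof (rule closure_sublattice[of eta, OF P0e _ _ _ _ S])
    show "\<And>F x c. F \<noteq> bot \<Longrightarrow> eta F x \<Longrightarrow> eta (filtermap (\<lambda>y. y + c) F) (x + c)"
      by (rule eta_addc[OF L])
    show "\<And>F x c. F \<noteq> bot \<Longrightarrow> eta F x \<Longrightarrow> eta (filtermap (\<lambda>y. sup y c) F) (sup x c)"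
      by (rule eta_sup[OF L])
    show "\<And>F x c. F \<noteq> bot \<Longrightarrow> eta F x \<Longrightarrow> eta (filtermap (\<lambda>y. inf y c) F) (inf x c)"
      by (rule eta_inf[OF L])
    show "\<And>F x r. F \<noteq> bot \<Longrightarrow> eta F x \<Longrightarrow> eta (filtermap (\<lambda>y. r *\<^sub>R y) F) (r *\<^sub>R x)"
      by (rule eta_scale[OF L])
  qed
  have dense: "order_dense_in E ?C"
    unfolding order_dense_in_def
  proof (intro ballI impI)
    fix h assume "h \<in> ?C" "0 < h"
    then show "\<exists>e\<in>E. 0 < e \<and> e \<le> h" using CO OB BB_dense[OF S] by blast
  qed
  have Creg: "regular_sublattice ?C"
    unfolding regular_sublattice_def
  proof (intro conjI allI impI)
    show "sublattice ?C" by (rule Csl)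
    fix G assume GC: "G \<subseteq> ?C" and inf: "is_inf_in ?C G 0"
    have Gpos: "\<forall>g\<in>G. 0 \<le> g" and Clb: "\<forall>y\<in>?C. (\<forall>g\<in>G. y \<le> g) \<longrightarrow> y \<le> 0"
      using inf unfolding is_inf_in_def by auto
    have "is_inf_in ?O G 0"
      unfolding is_inf_in_def
    proof (intro conjI ballI allI impI)
      show "0 \<in> ?O" by (rule sl_0[OF Osl])
      show "\<And>g. g \<in> G \<Longrightarrow> 0 \<le> g" using Gpos by blast
      fix y assume yO: "y \<in> ?O" and ylb: "\<forall>g\<in>G. y \<le> g"
      show "y \<le> 0"
      proof (rule ccontr)
        assume ny: "\<not> y \<le> 0"
        let ?w = "sup y 0"
        have wO: "?w \<in> ?O" using sl_sup[OF Osl yO sl_0[OF Osl]] .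
        have wpos: "0 < ?w"
        proof -
          have "?w \<noteq> 0" using ny by (metis sup_ge1)
          then show ?thesis by (simp add: order_less_le)
        qed
        obtain e where e: "e \<in> E" "0 < e" "e \<le> ?w" using BB_dense[OF S _ wpos] wO OB by blast
        have "\<forall>g\<in>G. e \<le> g" using e(3) ylb Gpos by (meson le_sup_iff order_trans)
        then have "e \<le> 0" using Clb e(1) EC by blast
        then show False using e(2) by simp
      qed
    qed
    then show "is_inf_in UNIV G 0" using Oreg GC CO unfolding regular_sublattice_def by blast
  qed
  show ?thesis using dense Creg by blast
qed

end
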